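(* Let $X$ be the weighted graph obtained as follows: start with $\mathbb N$ with edges $\{m,m+1\}$ of weight $1$; for every prime power $p^k$ ($p$ prime, $k\in\mathbb N$) attach at the vertex $p^k$ a cycle $G_p^k$ on $pk$ vertices (one vertex of the cycle identified with $p^k$, cycle edges of weight $1$); finally, between any two distinct vertices of $G_p^k$ add an edge of weight $p$. Equip $X$ with the weighted-graph metric. Then any two points of $X$ are connected by a $1$-path, $X$ is not coarsely equivalent to any metric space with bounded geometry, and $h_\infty(X)=0$.
   Context: The weighted distance between two vertices is the infimum over paths connecting them of the sum of the edge weights. A $\delta$-path is a sequence $(x_0,\dots,x_n)$ with $d(x_{i-1},x_i)\le\delta$. Bounded geometry: for every $r>0$ closed balls of radius $r$ have uniformly bounded cardinality. Coarse equivalence: a map $f$ with nondecreasing $\rho_\pm\colon[0,\infty)\to\mathbb R$, $\rho_-(r)\to\infty$, $\rho_-(d(x,x'))\le d(f(x),f(x'))\le\rho_+(d(x,x'))$, and coarsely dense image. Coarse entropy $h_\infty(X)=\lim_{\delta\to\infty}\lim_{R\to\infty}\limsup_{n\to\infty}\frac1n\log s(n,R,\delta,x_0)$, where $s(n,R,\delta,x_0)$ is the supremum of cardinalities of $R$-separated sets of $\delta$-paths of length $n$ starting at $x_0$, paths compared by $\max_i d(x_i,y_i)$. *)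

theory Defs
  imports "HOL-Analysis.Analysis" "HOL-Computational_Algebra.Primes"
    "HOL-Library.Extended_Real" "HOL-Library.Liminf_Limsup"
begin

text \<open>Vertices: the naturals (Nat m) and the extra cycle vertices (Cyc p k j), 0 < j < p*k,
  of the cycle G attached at p^k.  Vertex j = 0 of that cycle is identified with Nat (p^k).
  The type contains junk vertices; the vertex set of X is the carrier Xv.\<close>

datatype vert = Nat nat | Cyc nat nat nat

definition cv :: "nat \<Rightarrow> nat \<Rightarrow> nat \<Rightarrow> vert" where
  "cv p k j = (if j = 0 then Nat (p ^ k) else Cyc p k j)"

definition Xv :: "vert set" where
  "Xv = range Nat \<union> {Cyc p k j | p k j. prime p \<and> 1 \<le> k \<and> 0 < j \<and> j < p * k}"

inductive edge0 :: "vert \<Rightarrow> vert \<Rightarrow> real \<Rightarrow> bool" where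
  line: "edge0 (Nat m) (Nat (Suc m)) 1"
| cyc: "prime p \<Longrightarrow> 1 \<le> k \<Longrightarrow> j < p * k \<Longrightarrow>
          edge0 (cv p k j) (cv p k ((j + 1) mod (p * k))) 1"
| compl: "prime p \<Longrightarrow> 1 \<le> k \<Longrightarrow> i < p * k \<Longrightarrow> j < p * k \<Longrightarrow> i \<noteq> j \<Longrightarrow>
          edge0 (cv p k i) (cv p k j) (real p)"

definition edge :: "vert \<Rightarrow> vert \<Rightarrow> real \<Rightarrow> bool" where
  "edge x y w \<longleftrightarrow> edge0 x y w \<or> edge0 y x w"

inductive wwalk :: "vert \<Rightarrow> vert \<Rightarrow> real \<Rightarrow> bool" where
  refl: "wwalk x x 0"
| step: "edge x z a \<Longrightarrow> wwalk z y c \<Longrightarrow> wwalk x y (a + c)"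

definition gdist :: "vert \<Rightarrow> vert \<Rightarrow> real" where
  "gdist x y = Inf {c. wwalk x y c}"

definition metric_on :: "'a set \<Rightarrow> ('a \<Rightarrow> 'a \<Rightarrow> real) \<Rightarrow> bool" where
  "metric_on S d \<longleftrightarrow> (\<forall>x\<in>S. \<forall>y\<in>S. 0 \<le> d x y \<and> (d x y = 0 \<longleftrightarrow> x = y) \<and> d x y = d y x) \<and>
     (\<forall>x\<in>S. \<forall>y\<in>S. \<forall>z\<in>S. d x z \<le> d x y + d y z)"

definition chain_connected :: "'a set \<Rightarrow> ('a \<Rightarrow> 'a \<Rightarrow> real) \<Rightarrow> real \<Rightarrow> bool" where
  "chain_connected S d \<delta> \<longleftrightarrow> (\<forall>x\<in>S. \<forall>y\<in>S. \<exists>xs. xs \<noteq> [] \<and> set xs \<subseteq> S \<and> hd xs = x \<and> last xs = y \<and>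
      (\<forall>i. Suc i < length xs \<longrightarrow> d (xs ! i) (xs ! Suc i) \<le> \<delta>))"

definition bounded_geometry :: "'a set \<Rightarrow> ('a \<Rightarrow> 'a \<Rightarrow> real) \<Rightarrow> bool" where
  "bounded_geometry S d \<longleftrightarrow> (\<forall>r>0. \<exists>N::nat. \<forall>y\<in>S.
      finite {z\<in>S. d y z \<le> r} \<and> card {z\<in>S. d y z \<le> r} \<le> N)"

definition coarse_equivalence ::
  "'a set \<Rightarrow> ('a \<Rightarrow> 'a \<Rightarrow> real) \<Rightarrow> 'b set \<Rightarrow> ('b \<Rightarrow> 'b \<Rightarrow> real) \<Rightarrow> ('a \<Rightarrow> 'b) \<Rightarrow> bool" where
  "coarse_equivalence S d T e f \<longleftrightarrow> f ` S \<subseteq> T \<and>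
     (\<exists>\<rho>m \<rho>p :: real \<Rightarrow> real. mono_on {0..} \<rho>m \<and> mono_on {0..} \<rho>p \<and> filterlim \<rho>m at_top at_top \<and>
        (\<forall>x\<in>S. \<forall>x'\<in>S. \<rho>m (d x x') \<le> e (f x) (f x') \<and> e (f x) (f x') \<le> \<rho>p (d x x'))) \<and>
     (\<exists>C. \<forall>y\<in>T. \<exists>x\<in>S. e y (f x) \<le> C)"

definition delta_paths :: "'a set \<Rightarrow> ('a \<Rightarrow> 'a \<Rightarrow> real) \<Rightarrow> real \<Rightarrow> nat \<Rightarrow> 'a \<Rightarrow> 'a list set" where
  "delta_paths S d \<delta> n x0 = {xs. length xs = Suc n \<and> set xs \<subseteq> S \<and> hd xs = x0 \<and>
      (\<forall>i<n. d (xs ! i) (xs ! Suc i) \<le> \<delta>)}"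

definition path_dist :: "('a \<Rightarrow> 'a \<Rightarrow> real) \<Rightarrow> 'a list \<Rightarrow> 'a list \<Rightarrow> real" where
  "path_dist d xs ys = Max {d (xs ! i) (ys ! i) | i. i < length xs}"

definition separated_paths :: "('a \<Rightarrow> 'a \<Rightarrow> real) \<Rightarrow> real \<Rightarrow> 'a list set \<Rightarrow> bool" where
  "separated_paths d R P \<longleftrightarrow> (\<forall>xs\<in>P. \<forall>ys\<in>P. xs \<noteq> ys \<longrightarrow> R \<le> path_dist d xs ys)"

definition sep_count :: "'a set \<Rightarrow> ('a \<Rightarrow> 'a \<Rightarrow> real) \<Rightarrow> nat \<Rightarrow> real \<Rightarrow> real \<Rightarrow> 'a \<Rightarrow> ereal" where
  "sep_count S d n R \<delta> x0 = Sup {ereal (real (card P)) | P. finite P \<and> P \<subseteq> delta_paths S d \<delta> n x0 \<and>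
      separated_paths d R P}"

definition elog :: "ereal \<Rightarrow> ereal" where
  "elog s = (if s = \<infinity> then \<infinity> else ereal (ln (real_of_ereal s)))"

definition coarse_entropy :: "'a set \<Rightarrow> ('a \<Rightarrow> 'a \<Rightarrow> real) \<Rightarrow> 'a \<Rightarrow> ereal" where
  "coarse_entropy S d x0 = Lim at_top (\<lambda>\<delta>::real. Lim at_top (\<lambda>R::real.
      limsup (\<lambda>n. ereal (1 / real n) * elog (sep_count S d n R \<delta> x0))))"

end

theory Submission
  imports Defs
begin

section \<open>Basic walk facts\<close>

lemma edge0_nonneg: "edge0 x y w \<Longrightarrow> 0 \<le> w"
  by (induction rule: edge0.induct) auto

lemma edge_nonneg: "edge x y w \<Longrightarrow> 0 \<le> w"
  unfolding edge_def using edge0_nonneg by blast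

lemma edge_sym: "edge x y w \<Longrightarrow> edge y x w"
  unfolding edge_def by blast

lemma wwalk_nonneg: "wwalk x y c \<Longrightarrow> 0 \<le> c"
  by (induction rule: wwalk.induct) (auto dest: edge_nonneg)

lemma wwalk_edge: "edge x y w \<Longrightarrow> wwalk x y w"
  using wwalk.step[OF _ wwalk.refl] by fastforce

lemma wwalk_trans: "wwalk x y a \<Longrightarrow> wwalk y z b \<Longrightarrow> wwalk x z (a + b)"
proof (induction x y a arbitrary: b rule: wwalk.induct)
  case (refl x) then show ?case by simp
next
  case (step x1 x2 a1 y1 c1)
  have "wwalk x2 z (c1 + b)" using step.IH step.prems .
  from wwalk.step[OF step(1) this] show ?case by (simp add: add.assoc)
qed

lemma wwalk_sym: "wwalk x y c \<Longrightarrow> wwalk y x c"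
proof (induction rule: wwalk.induct)
  case (refl x) then show ?case by (rule wwalk.refl)
next
  case (step x1 x2 a1 y1 c1)
  have "wwalk x2 x1 a1" using step(1) by (rule wwalk_edge[OF edge_sym])
  from wwalk_trans[OF step(3) this] show ?case by (simp add: add.commute)
qed

lemma gdist_le: assumes "wwalk x y c" shows "gdist x y \<le> c"
  unfolding gdist_def
  by (rule cInf_lower) (use assms wwalk_nonneg in \<open>auto simp: bdd_below_def\<close>)

lemma gdist_ge: assumes "wwalk x y c0" "\<And>c. wwalk x y c \<Longrightarrow> a \<le> c" shows "a \<le> gdist x y"
  unfolding gdist_def by (rule cInf_greatest) (use assms in auto)

lemma gdist_nonneg: assumes "wwalk x y c0" shows "0 \<le> gdist x y"
  using gdist_ge[OF assms] wwalk_nonneg by blast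

lemma gdist_refl: "gdist x x = 0"
  using gdist_le[OF wwalk.refl[of x]] gdist_nonneg[OF wwalk.refl[of x]] by simp

lemma cv_simps: "cv p k 0 = Nat (p ^ k)" "j > 0 \<Longrightarrow> cv p k j = Cyc p k j"
  by (auto simp: cv_def)

section \<open>Connectivity\<close>

lemma walk_line: "wwalk (Nat m) (Nat (m + d)) (real d)"
proof (induction d)
  case 0 then show ?case using wwalk.refl by simp
next
  case (Suc d)
  have "edge (Nat (m + d)) (Nat (m + Suc d)) 1" unfolding edge_def by (auto intro: edge0.line)
  from wwalk_trans[OF Suc wwalk_edge[OF this]] show ?case by (simp add: add.commute)
qed

lemma walk_line': "wwalk (Nat m) (Nat m') \<bar>real m - real m'\<bar>"
proof (cases "m \<le> m'")
  case True
  with walk_line[of m "m' - m"] show ?thesis by simp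
next
  case False
  from walk_line[of m' "m - m'"] False have "wwalk (Nat m') (Nat m) (real (m - m'))" by simp
  then have "wwalk (Nat m) (Nat m') (real (m - m'))" by (rule wwalk_sym)
  with False show ?thesis by (simp add: of_nat_diff)
qed

lemma walk_cyc: assumes "prime p" "1 \<le> k" "i + d < p * k"
  shows "wwalk (cv p k i) (cv p k (i + d)) (real d)"
  using assms(3)
proof (induction d)
  case 0 then show ?case using wwalk.refl by simp
next
  case (Suc d)
  have "edge0 (cv p k (i + d)) (cv p k ((i + d + 1) mod (p * k))) 1"
    using Suc assms by (intro edge0.cyc) auto
  moreover have "(i + d + 1) mod (p * k) = i + Suc d" using Suc by simp
  ultimately have "edge (cv p k (i + d)) (cv p k (i + Suc d)) 1" unfolding edge_def by simp
  from wwalk_trans[OF Suc.IH wwalk_edge[OF this]] Suc show ?case by (simp add: add.commute)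
qed

lemma walk_cyc': assumes "prime p" "1 \<le> k" "i < p * k" "j < p * k"
  shows "wwalk (cv p k i) (cv p k j) \<bar>real i - real j\<bar>"
proof (cases "i \<le> j")
  case True
  with walk_cyc[of p k i "j - i"] assms show ?thesis by simp
next
  case False
  from walk_cyc[of p k j "i - j"] assms False have "wwalk (cv p k j) (cv p k i) (real (i - j))" by simp
  then have "wwalk (cv p k i) (cv p k j) (real (i - j))" by (rule wwalk_sym)
  with False show ?thesis by (simp add: of_nat_diff)
qed

lemma walk_compl: assumes "prime p" "1 \<le> k" "i < p * k" "j < p * k" "i \<noteq> j"
  shows "wwalk (cv p k i) (cv p k j) (real p)"
  using assms by (intro wwalk_edge) (auto simp: edge_def intro: edge0.compl)

lemma Xv_Cyc: "Cyc p k j \<in> Xv \<longleftrightarrow> prime p \<and> 1 \<le> k \<and> 0 < j \<and> j < p * k"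
  by (auto simp: Xv_def)

lemma Nat_in_Xv [simp]: "Nat m \<in> Xv" by (auto simp: Xv_def)

lemma conn0: assumes "x \<in> Xv" shows "\<exists>c. wwalk x (Nat 0) c"
proof (cases x)
  case (Nat m) then show ?thesis using walk_line' by blast
next
  case (Cyc p k j)
  with assms have h: "prime p" "1 \<le> k" "0 < j" "j < p * k" by (auto simp: Xv_Cyc)
  then have "0 < p * k" by linarith
  from walk_cyc'[OF h(1,2) h(4) this] h(3) have "wwalk x (Nat (p^k)) \<bar>real j - 0\<bar>"
    by (simp add: Cyc cv_def)
  from wwalk_trans[OF this walk_line'] show ?thesis by blast
qed

lemma conn: assumes "x \<in> Xv" "y \<in> Xv" shows "\<exists>c. wwalk x y c"
  using conn0[OF assms(1)] conn0[OF assms(2)] wwalk_trans wwalk_sym by blast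

lemma gdist_sym: "gdist x y = gdist y x"
proof -
  have "{c. wwalk x y c} = {c. wwalk y x c}" using wwalk_sym by blast
  then show ?thesis unfolding gdist_def by simp
qed

lemma gdist_triangle: assumes "x \<in> Xv" "y \<in> Xv" "z \<in> Xv"
  shows "gdist x z \<le> gdist x y + gdist y z"
proof -
  obtain c1 where c1: "wwalk x y c1" using conn assms by blast
  obtain c2 where c2: "wwalk y z c2" using conn assms by blast
  have "\<And>a b. wwalk x y a \<Longrightarrow> wwalk y z b \<Longrightarrow> gdist x z \<le> a + b"
    by (rule gdist_le) (rule wwalk_trans)
  then have "\<And>b. wwalk y z b \<Longrightarrow> gdist x z - b \<le> gdist x y"
  proof -
    fix b assume b: "wwalk y z b"
    show "gdist x z - b \<le> gdist x y"
      by (rule gdist_ge[OF c1]) (use \<open>\<And>a b. wwalk x y a \<Longrightarrow> wwalk y z b \<Longrightarrow> gdist x z \<le> a + b\<close> b in force)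
  qed
  then have "\<And>b. wwalk y z b \<Longrightarrow> gdist x z - gdist x y \<le> b" by (auto simp: algebra_simps)
  then have "gdist x z - gdist x y \<le> gdist y z" by (intro gdist_ge[OF c2])
  then show ?thesis by simp
qed

lemma gdist_nonneg': "x \<in> Xv \<Longrightarrow> y \<in> Xv \<Longrightarrow> 0 \<le> gdist x y"
  using conn gdist_nonneg by blast

section \<open>Potentials\<close>

lemma potential_walk:
  fixes \<phi> :: "vert \<Rightarrow> real"
  assumes "\<And>a b w. edge0 a b w \<Longrightarrow> \<bar>\<phi> a - \<phi> b\<bar> \<le> w"
  shows "wwalk x y c \<Longrightarrow> \<bar>\<phi> x - \<phi> y\<bar> \<le> (c::real)"
proof (induction rule: wwalk.induct)
  case (refl x) then show ?case by simp
next
  case (step x z a y c)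
  have "\<bar>\<phi> x - \<phi> z\<bar> \<le> a"
  proof (cases "edge0 x z a")
    case True then show ?thesis using assms by blast
  next
    case False then have "edge0 z x a" using step(1) unfolding edge_def by blast
    then show ?thesis using assms[of z x a] by (simp add: abs_minus_commute)
  qed
  with step(3) show ?case by linarith
qed

lemma potential_gdist:
  fixes \<phi> :: "vert \<Rightarrow> real"
  assumes "\<And>a b w. edge0 a b w \<Longrightarrow> \<bar>\<phi> a - \<phi> b\<bar> \<le> w" "x \<in> Xv" "y \<in> Xv"
  shows "\<bar>\<phi> x - \<phi> y\<bar> \<le> gdist x y"
proof -
  obtain c0 where "wwalk x y c0" using conn[OF assms(2,3)] by blast
  then show ?thesis using potential_walk[OF assms(1)] by (rule gdist_ge)
qed

definition pi0 :: "vert \<Rightarrow> nat" where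
  "pi0 w = (case w of Nat m \<Rightarrow> m | Cyc p k i \<Rightarrow> p ^ k)"

lemma pi0_cv [simp]: "pi0 (cv p k j) = p ^ k"
  by (auto simp: cv_def pi0_def)

lemma pi0_Nat [simp]: "pi0 (Nat m) = m" by (simp add: pi0_def)

lemma pi0_edge: "edge0 a b w \<Longrightarrow> \<bar>(real \<circ> pi0) a - (real \<circ> pi0) b\<bar> \<le> w"
  by (induction rule: edge0.induct) simp_all

lemma pi0_lip: "\<bar>real (pi0 x) - real (pi0 y)\<bar> \<le> gdist x y" if "x \<in> Xv" "y \<in> Xv"
proof -
  from potential_gdist[OF pi0_edge that] show ?thesis by simp
qed

definition cdist :: "nat \<Rightarrow> nat \<Rightarrow> nat \<Rightarrow> nat" where
  "cdist n a b = min (if a \<le> b then b - a else a - b) (n - (if a \<le> b then b - a else a - b))"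

lemma cdist_self [simp]: "cdist n a a = 0" by (simp add: cdist_def)

lemma cdist_step: assumes "j < n" "i < n"
  shows "cdist n ((j+1) mod n) i \<le> cdist n j i + 1 \<and> cdist n j i \<le> cdist n ((j+1) mod n) i + 1"
proof (cases "j + 1 < n")
  case True
  then have "(j+1) mod n = j + 1" by simp
  then show ?thesis using assms unfolding cdist_def by (auto simp: min_def split: if_splits)
next
  case False
  then have "j + 1 = n" using assms by simp
  then have "(j+1) mod n = 0" "j = n - 1" by auto
  then show ?thesis using assms unfolding cdist_def by (auto simp: min_def split: if_splits)
qed

definition idxp :: "nat \<Rightarrow> nat \<Rightarrow> vert \<Rightarrow> nat" where
  "idxp p k w = (case w of Nat m \<Rightarrow> 0 | Cyc q l i \<Rightarrow> if q = p \<and> l = k then i else 0)"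

lemma idxp_cv [simp]: "idxp p k (cv q l j) = (if q = p \<and> l = k then j else 0)"
  by (auto simp: idxp_def cv_def)

lemma idxp_Nat [simp]: "idxp p k (Nat m) = 0"
  by (auto simp: idxp_def)

definition cpot :: "nat \<Rightarrow> nat \<Rightarrow> nat \<Rightarrow> vert \<Rightarrow> real" where
  "cpot p k i w = real (min p (cdist (p * k) (idxp p k w) i))"

lemma min_step: "(x::nat) \<le> y + 1 \<Longrightarrow> y \<le> x + 1 \<Longrightarrow> \<bar>real (min p x) - real (min p y)\<bar> \<le> 1"
  by (auto simp: min_def)

lemma cpot_edge: assumes "i < p * k"
  shows "edge0 a b w \<Longrightarrow> \<bar>cpot p k i a - cpot p k i b\<bar> \<le> w"
proof (induction rule: edge0.induct)
  case (line m) then show ?case by (simp add: cpot_def)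
next
  case (cyc q l j)
  show ?case
  proof (cases "q = p \<and> l = k")
    case True
    then have j: "j < p * k" using cyc by simp
    from cdist_step[OF j assms] have
      "\<bar>real (min p (cdist (p*k) j i)) - real (min p (cdist (p*k) ((j+1) mod (p*k)) i))\<bar> \<le> 1"
      by (intro min_step) auto
    then show ?thesis using True by (simp add: cpot_def)
  qed (auto simp: cpot_def)
next
  case (compl q l i' j')
  show ?case
  proof (cases "q = p \<and> l = k")
    case True
    then show ?thesis by (auto simp: cpot_def min_def)
  qed (auto simp: cpot_def)
qed

lemma cv_in_Xv: "prime p \<Longrightarrow> 1 \<le> k \<Longrightarrow> j < p * k \<Longrightarrow> cv p k j \<in> Xv"
  by (auto simp: cv_def Xv_Cyc)

lemma cyc_lower: assumes "prime p" "1 \<le> k" "i < p * k" "u \<in> Xv"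
  shows "real (min p (cdist (p * k) (idxp p k u) i)) \<le> gdist u (cv p k i)"
proof -
  have e: "\<And>a b w. edge0 a b w \<Longrightarrow> \<bar>cpot p k i a - cpot p k i b\<bar> \<le> w"
    using cpot_edge[OF assms(3)] by blast
  from potential_gdist[where \<phi>="cpot p k i", OF e assms(4) cv_in_Xv[OF assms(1-3)]]
  show ?thesis by (simp add: cpot_def)
qed

inductive ch :: "vert \<Rightarrow> vert \<Rightarrow> bool" where
  ch_refl: "x \<in> Xv \<Longrightarrow> ch x x"
| ch_step: "x \<in> Xv \<Longrightarrow> gdist x y \<le> 1 \<Longrightarrow> ch y z \<Longrightarrow> ch x z"

lemma ch_Xv: "ch x y \<Longrightarrow> x \<in> Xv \<and> y \<in> Xv"
  by (induction rule: ch.induct) auto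

lemma ch_trans: "ch x y \<Longrightarrow> ch y z \<Longrightarrow> ch x z"
  by (induction rule: ch.induct) (auto intro: ch_step)

lemma ch_one: "x \<in> Xv \<Longrightarrow> y \<in> Xv \<Longrightarrow> gdist x y \<le> 1 \<Longrightarrow> ch x y"
  by (blast intro: ch_step ch_refl)

lemma ch_sym: "ch x y \<Longrightarrow> ch y x"
proof (induction rule: ch.induct)
  case (ch_refl x) then show ?case by (rule ch.ch_refl)
next
  case (ch_step x y z)
  have "ch y x" using ch_step ch_Xv by (intro ch_one) (auto simp: gdist_sym)
  with ch_step.IH show ?case by (rule ch_trans)
qed

lemma ch_list: "ch x y \<Longrightarrow> \<exists>xs. xs \<noteq> [] \<and> set xs \<subseteq> Xv \<and> hd xs = x \<and> last xs = y \<and>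
      (\<forall>i. Suc i < length xs \<longrightarrow> gdist (xs ! i) (xs ! Suc i) \<le> 1)"
proof (induction rule: ch.induct)
  case (ch_refl x) then show ?case by (intro exI[of _ "[x]"]) auto
next
  case (ch_step x y z)
  then obtain xs where xs: "xs \<noteq> []" "set xs \<subseteq> Xv" "hd xs = y" "last xs = z"
    "\<forall>i. Suc i < length xs \<longrightarrow> gdist (xs ! i) (xs ! Suc i) \<le> 1" by blast
  have "\<forall>i. Suc i < length (x # xs) \<longrightarrow> gdist ((x#xs) ! i) ((x#xs) ! Suc i) \<le> 1"
  proof (intro allI impI)
    fix i assume "Suc i < length (x # xs)"
    then show "gdist ((x#xs) ! i) ((x#xs) ! Suc i) \<le> 1"
      using xs ch_step(2) by (cases i) (auto simp: hd_conv_nth)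
  qed
  then show ?case using xs ch_step(1) by (intro exI[of _ "x # xs"]) auto
qed

lemma ch_Nat: "ch (Nat m) (Nat 0)"
proof (induction m)
  case 0 then show ?case by (auto intro: ch_refl)
next
  case (Suc m)
  have "gdist (Nat (Suc m)) (Nat m) \<le> 1" using gdist_le[OF walk_line'[of "Suc m" m]] by simp
  then have "ch (Nat (Suc m)) (Nat m)" by (intro ch_one) auto
  then show ?case using Suc ch_trans by blast
qed

lemma ch_cv: assumes "prime p" "1 \<le> k" shows "j < p * k \<Longrightarrow> ch (cv p k j) (cv p k 0)"
proof (induction j)
  case 0 then show ?case using cv_in_Xv[OF assms] by (auto intro: ch_refl)
next
  case (Suc j)
  have "gdist (cv p k (Suc j)) (cv p k j) \<le> 1"
    using gdist_le[OF walk_cyc'[OF assms, of "Suc j" j]] Suc by simp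
  then have "ch (cv p k (Suc j)) (cv p k j)" using Suc cv_in_Xv[OF assms] by (intro ch_one) auto
  then show ?case using Suc ch_trans by simp
qed

lemma ch_all: assumes "x \<in> Xv" shows "ch x (Nat 0)"
proof (cases x)
  case (Nat m) then show ?thesis using ch_Nat by simp
next
  case (Cyc p k j)
  with assms have h: "prime p" "1 \<le> k" "0 < j" "j < p * k" by (auto simp: Xv_Cyc)
  have "ch x (Nat (p ^ k))" using ch_cv[OF h(1,2,4)] h(3) by (simp add: Cyc cv_def)
  then show ?thesis using ch_Nat ch_trans by blast
qed

lemma part1: "chain_connected Xv gdist 1"
  unfolding chain_connected_def
proof (intro ballI)
  fix x y assume "x \<in> Xv" "y \<in> Xv"
  then have "ch x y" using ch_all[of x] ch_sym[OF ch_all[of y]] ch_trans by blast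
  then show "\<exists>xs. xs \<noteq> [] \<and> set xs \<subseteq> Xv \<and> hd xs = x \<and> last xs = y \<and>
      (\<forall>i. Suc i < length xs \<longrightarrow> gdist (xs ! i) (xs ! Suc i) \<le> 1)" by (rule ch_list)
qed

lemma cdist_sym: "cdist n a b = cdist n b a"
  unfolding cdist_def by (cases "a \<le> b") auto

lemma cdist_far: assumes "0 < p" "1 \<le> t" "t < k" "1 \<le> t'" "t' < k" "t \<noteq> t'"
  shows "p \<le> cdist (p*k) (p*t) (p*t')"
proof -
  have *: "p \<le> cdist (p*k) (p*a) (p*b)" if "1 \<le> a" "a < b" "b < k" for a b
  proof -
    have "p*a \<le> p*b" using that by simp
    have 1: "p*b - p*a = p*(b-a)" by (simp add: diff_mult_distrib2)
    have 2: "p*k - p*(b-a) = p*(k-(b-a))" by (simp add: diff_mult_distrib2)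
    have "p*1 \<le> p*(b-a)" using that by (intro mult_le_mono2) simp
    moreover have "p*1 \<le> p*(k-(b-a))" using that by (intro mult_le_mono2) simp
    ultimately show ?thesis unfolding cdist_def using `p*a \<le> p*b` 1 2 by simp
  qed
  show ?thesis
  proof (cases "t < t'")
    case True then show ?thesis using * assms by blast
  next
    case False
    then have "t' < t" using assms by simp
    from *[OF assms(4) this assms(3)] show ?thesis by (simp add: cdist_sym)
  qed
qed

lemma part2: "\<not> (\<exists>(Y :: 'b set) (e :: 'b \<Rightarrow> 'b \<Rightarrow> real) (f :: vert \<Rightarrow> 'b).
          metric_on Y e \<and> bounded_geometry Y e \<and> coarse_equivalence Xv gdist Y e f)"
proof
  assume "\<exists>(Y :: 'b set) (e :: 'b \<Rightarrow> 'b \<Rightarrow> real) (f :: vert \<Rightarrow> 'b).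
          metric_on Y e \<and> bounded_geometry Y e \<and> coarse_equivalence Xv gdist Y e f"
  then obtain Y e and f :: "vert \<Rightarrow> 'b" where mY: "metric_on Y e" and bg: "bounded_geometry Y e"
    and ce: "coarse_equivalence Xv gdist Y e f" by blast
  from ce obtain \<rho>m \<rho>p where fY: "f ` Xv \<subseteq> Y" and mono: "mono_on {0..} \<rho>p"
    and lim: "filterlim \<rho>m at_top at_top"
    and lb: "\<forall>x\<in>Xv. \<forall>x'\<in>Xv. \<rho>m (gdist x x') \<le> e (f x) (f x')"
    and ub: "\<forall>x\<in>Xv. \<forall>x'\<in>Xv. e (f x) (f x') \<le> \<rho>p (gdist x x')"
    unfolding coarse_equivalence_def by blast
  from lim have "eventually (\<lambda>x. \<rho>m x \<ge> 1) at_top" by (simp add: filterlim_at_top)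
  then obtain x1 where x1: "\<And>x. x \<ge> x1 \<Longrightarrow> \<rho>m x \<ge> 1" by (auto simp: eventually_at_top_linorder)
  obtain p where p: "prime p" "p > nat \<lceil>x1\<rceil>" using bigger_prime by blast
  have px1: "real p \<ge> x1" using p(2) by linarith
  have p2: "p \<ge> 2" using p(1) prime_ge_2_nat by blast
  define r where "r = max 1 (\<rho>p (real p))"
  have "r > 0" unfolding r_def by simp
  with bg obtain N where N: "\<forall>y\<in>Y. finite {z\<in>Y. e y z \<le> r} \<and> card {z\<in>Y. e y z \<le> r} \<le> N"
    unfolding bounded_geometry_def by blast
  define k where "k = N + 2"
  have k1: "1 \<le> k" unfolding k_def by simp
  define u where "u t = Cyc p k (p * t)" for t
  have ucv: "u t = cv p k (p*t)" if "t \<in> {1..<k}" for t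
    using that p2 by (auto simp: u_def cv_def)
  have pt: "p * t < p * k" if "t \<in> {1..<k}" for t using that p2 by simp
  have uX: "u t \<in> Xv" if "t \<in> {1..<k}" for t
    using that p2 p(1) k1 by (auto simp: u_def Xv_Cyc)
  define y where "y = f (Nat (p^k))"
  have yY: "y \<in> Y" using fY unfolding y_def by auto
  have inj: "inj_on (f \<circ> u) {1..<k}"
  proof (rule inj_onI)
    fix t t' assume t: "t \<in> {1..<k}" and t': "t' \<in> {1..<k}" and eq: "(f \<circ> u) t = (f \<circ> u) t'"
    show "t = t'"
    proof (rule ccontr)
      assume ne: "t \<noteq> t'"
      have "real (min p (cdist (p * k) (idxp p k (u t)) (p*t'))) \<le> gdist (u t) (cv p k (p*t'))"
        by (rule cyc_lower[OF p(1) k1 pt[OF t'] uX[OF t]])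
      moreover have "idxp p k (u t) = p * t" by (simp add: u_def idxp_def)
      moreover have "p \<le> cdist (p*k) (p*t) (p*t')" using cdist_far[of p t k t'] t t' ne p2 by simp
      ultimately have "real p \<le> gdist (u t) (u t')" using ucv[OF t'] by simp
      then have "\<rho>m (gdist (u t) (u t')) \<ge> 1" using x1 px1 by simp
      moreover have "\<rho>m (gdist (u t) (u t')) \<le> e (f (u t)) (f (u t'))"
        using lb uX[OF t] uX[OF t'] by blast
      ultimately have ge: "e (f (u t)) (f (u t')) \<ge> 1" by linarith
      have "f (u t) \<in> Y" using fY uX[OF t] by auto
      then have "e (f (u t)) (f (u t)) = 0" using mY unfolding metric_on_def by blast
      with ge eq show False by simp
    qed
  qed
  have sub: "(f \<circ> u) ` {1..<k} \<subseteq> {z\<in>Y. e y z \<le> r}"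
  proof
    fix z assume "z \<in> (f \<circ> u) ` {1..<k}"
    then obtain t where t: "t \<in> {1..<k}" and z: "z = f (u t)" by auto
    have w: "wwalk (Nat (p^k)) (u t) (real p)"
      using walk_compl[OF p(1) k1, of 0 "p*t"] pt[OF t] t ucv[OF t] by (simp add: cv_simps)
    have g0: "0 \<le> gdist (Nat (p^k)) (u t)" by (rule gdist_nonneg[OF w])
    have g1: "gdist (Nat (p^k)) (u t) \<le> real p" by (rule gdist_le[OF w])
    have "e y z \<le> \<rho>p (gdist (Nat (p^k)) (u t))" using ub uX[OF t] unfolding y_def z by simp
    also have "\<dots> \<le> \<rho>p (real p)" using mono g0 g1 by (intro mono_onD[OF mono]) auto
    also have "\<dots> \<le> r" unfolding r_def by simp
    finally show "z \<in> {z\<in>Y. e y z \<le> r}" using fY uX[OF t] z by auto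
  qed
  have "card ((f \<circ> u) ` {1..<k}) = k - 1" using card_image[OF inj] by simp
  moreover have "card ((f \<circ> u) ` {1..<k}) \<le> N"
    using card_mono[OF _ sub] N yY by (meson order_trans)
  ultimately show False unfolding k_def by simp
qed

definition lab :: "nat \<Rightarrow> vert \<Rightarrow> nat \<times> nat \<times> nat" where
  "lab B w = (case w of Nat m \<Rightarrow> (0, m div B, 0)
      | Cyc p k i \<Rightarrow> if p \<le> B then (0, p ^ k div B, 0) else (p, k, i div B))"

definition pib :: "nat \<Rightarrow> nat \<times> nat \<times> nat \<Rightarrow> nat" where
  "pib B l = (case l of (a, b, c) \<Rightarrow> if a = 0 then b else a ^ b div B)"

definition T3 :: "nat \<Rightarrow> nat set" where
  "T3 b = set [b - 1, b, b + 1]"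

definition S6 :: "nat \<Rightarrow> nat \<Rightarrow> nat \<Rightarrow> nat set" where
  "S6 B n c = set [c - 1, c, c + 1, 0, (n - B) div B, (n - 1) div B]"

definition c0 :: "nat \<times> nat \<times> nat \<Rightarrow> nat \<Rightarrow> nat \<Rightarrow> nat" where
  "c0 l p k = (case l of (a, b, c) \<Rightarrow> if a = p \<and> b = k then c else 0)"

definition Nset :: "nat \<Rightarrow> nat \<times> nat \<times> nat \<Rightarrow> (nat \<times> nat \<times> nat) set" where
  "Nset B l = (\<lambda>b. (0, b, 0)) ` T3 (pib B l) \<union>
     {(p, k, c) | p k c. prime p \<and> 1 \<le> k \<and> p ^ k div B \<in> T3 (pib B l) \<and> c \<in> S6 B (p * k) (c0 l p k)}"

lemma div_lt_add: assumes "0 < (B::nat)" "x < y + B" shows "x div B \<le> y div B + 1"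
proof -
  have "x div B \<le> (y + B) div B" using assms by (intro div_le_mono) simp
  also have "\<dots> = y div B + 1" using assms by simp
  finally show ?thesis .
qed

lemma div_T3_nat: assumes "0 < (B::nat)" "a < b + B" "b < a + B" shows "a div B \<in> T3 (b div B)"
  using div_lt_add[OF assms(1,2)] div_lt_add[OF assms(1,3)] unfolding T3_def by auto

lemma div_T3: assumes "\<bar>real a - real b\<bar> < real B" shows "a div B \<in> T3 (b div B)"
proof -
  have "0 < B" using assms by linarith
  moreover have "a < b + B" "b < a + B" using assms by linarith+
  ultimately show ?thesis by (rule div_T3_nat)
qed

lemma block_S6: assumes "0 < B" "i < n" "i0 < n" "cdist n i0 i < B"
  shows "i div B \<in> S6 B n (i0 div B)"
proof -
  define D where "D = (if i0 \<le> i then i - i0 else i0 - i)"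
  have cd: "cdist n i0 i = min D (n - D)" unfolding cdist_def D_def by simp
  show ?thesis
  proof (cases "D < B")
    case True
    then have "i < i0 + B" "i0 < i + B" unfolding D_def by (auto split: if_splits)
    then have "i div B \<in> T3 (i0 div B)" using assms by (intro div_T3_nat) auto
    then show ?thesis unfolding T3_def S6_def by auto
  next
    case False
    then have nD: "n - D < B" using cd assms by (auto simp: min_def split: if_splits)
    show ?thesis
    proof (cases "i0 \<le> i")
      case True
      then have "n - B \<le> i" using nD assms unfolding D_def by auto
      then have a: "(n - B) div B \<le> i div B" by (rule div_le_mono)
      have "i \<le> n - 1" using assms by simp
      then have b: "i div B \<le> (n - 1) div B" by (rule div_le_mono)
      have "n - 1 < (n - B) + B" using assms by simp
      then have c: "(n - 1) div B \<le> (n - B) div B + 1" using div_lt_add[OF assms(1)] by blast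
      from a b c have "i div B = (n - B) div B \<or> i div B = (n - 1) div B" by linarith
      then show ?thesis unfolding S6_def by auto
    next
      case False
      then have "i < B" using nD assms unfolding D_def by auto
      then have "i div B = 0" by simp
      then show ?thesis unfolding S6_def by auto
    qed
  qed
qed

lemma lab_cases: assumes "w \<in> Xv" "0 < B"
  shows "(lab B w = (0, pi0 w div B, 0) \<and> gdist w (Nat (pi0 w)) \<le> real B) \<or>
    (\<exists>p k i. w = Cyc p k i \<and> prime p \<and> 1 \<le> k \<and> 0 < i \<and> i < p * k \<and> B < p \<and> lab B w = (p, k, i div B))"
proof (cases w)
  case (Nat m) then show ?thesis by (simp add: lab_def gdist_refl)
next
  case (Cyc p k i)
  with assms have h: "prime p" "1 \<le> k" "0 < i" "i < p * k" by (auto simp: Xv_Cyc)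
  show ?thesis
  proof (cases "p \<le> B")
    case True
    have "0 < p * k" using h by linarith
    from walk_compl[OF h(1,2) h(4) this] h(3)
    have "wwalk w (Nat (p ^ k)) (real p)" by (simp add: Cyc cv_def)
    then have "gdist w (Nat (p ^ k)) \<le> real B" using gdist_le True by fastforce
    then show ?thesis using True by (simp add: lab_def Cyc pi0_def)
  next
    case False then show ?thesis using h by (simp add: lab_def Cyc)
  qed
qed

lemma pib_lab: "w \<in> Xv \<Longrightarrow> 0 < B \<Longrightarrow> pib B (lab B w) = pi0 w div B"
  using lab_cases[of w B] by (auto simp: pib_def pi0_def)

lemma idxp_lt: "u \<in> Xv \<Longrightarrow> 0 < p * k \<Longrightarrow> idxp p k u < p * k"
  by (cases u) (auto simp: idxp_def Xv_Cyc)

lemma c0_lab: "u \<in> Xv \<Longrightarrow> B < p \<Longrightarrow> c0 (lab B u) p k = idxp p k u div B"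
  by (cases u) (auto simp: lab_def c0_def idxp_def)

lemma neighbor: assumes "u \<in> Xv" "v \<in> Xv" "0 < B" "gdist u v < real B"
  shows "lab B v \<in> Nset B (lab B u)"
proof -
  have "\<bar>real (pi0 u) - real (pi0 v)\<bar> < real B" using pi0_lip[OF assms(1,2)] assms(4) by linarith
  then have T: "pi0 v div B \<in> T3 (pib B (lab B u))" using pib_lab[OF assms(1,3)] div_T3
    by (simp add: abs_minus_commute)
  from lab_cases[OF assms(2,3)] show ?thesis
  proof
    assume "lab B v = (0, pi0 v div B, 0) \<and> gdist v (Nat (pi0 v)) \<le> real B"
    then show ?thesis using T unfolding Nset_def by auto
  next
    assume "\<exists>p k i. v = Cyc p k i \<and> prime p \<and> 1 \<le> k \<and> 0 < i \<and> i < p * k \<and> B < p \<and> lab B v = (p, k, i div B)"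
    then obtain p k i where h: "v = Cyc p k i" "prime p" "1 \<le> k" "0 < i" "i < p * k" "B < p"
      "lab B v = (p, k, i div B)" by blast
    have vcv: "v = cv p k i" using h by (simp add: cv_def)
    have "real (min p (cdist (p * k) (idxp p k u) i)) \<le> gdist u (cv p k i)"
      by (rule cyc_lower[OF h(2,3,5) assms(1)])
    then have "real (min p (cdist (p * k) (idxp p k u) i)) < real B" using assms(4) vcv by simp
    then have cdl: "cdist (p * k) (idxp p k u) i < B" using h(6) by (auto simp: min_def split: if_splits)
    have "0 < p * k" using h by linarith
    then have "idxp p k u < p * k" by (rule idxp_lt[OF assms(1)])
    from block_S6[OF assms(3) h(5) this cdl]
    have "i div B \<in> S6 B (p * k) (c0 (lab B u) p k)" using c0_lab[OF assms(1) h(6)] by simp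
    moreover have "p ^ k div B \<in> T3 (pib B (lab B u))" using T h by (simp add: pi0_def)
    ultimately show ?thesis using h unfolding Nset_def by auto
  qed
qed


lemma card_T3: "finite (T3 b) \<and> card (T3 b) \<le> 3"
  unfolding T3_def using card_length[of "[b - 1, b, b + 1]"] by simp

lemma card_S6: "finite (S6 B n c) \<and> card (S6 B n c) \<le> 6"
  unfolding S6_def using card_length[of "[c - 1, c, c + 1, 0, (n - B) div B, (n - 1) div B]"] by simp

lemma le_of_div_ge: "c \<le> x div B \<Longrightarrow> c * B \<le> (x::nat)"
proof -
  assume "c \<le> x div B"
  then have "c * B \<le> x div B * B" by simp
  also have "\<dots> \<le> x" by (simp add: div_times_less_eq_dividend)
  finally show ?thesis .
qed

lemma lt_of_div_le: assumes "0 < B" "x div B \<le> c" shows "x < (c + 1) * (B::nat)"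
proof -
  have "x mod B < B" using assms by simp
  then have "x < x div B * B + B" using div_mult_mod_eq[of x B] by linarith
  also have "\<dots> \<le> c * B + B" using assms by simp
  finally show ?thesis by simp
qed

lemma T3_interval: assumes "0 < B" shows "{x. x div B \<in> T3 b} \<subseteq> {(b - 1) * B ..< (b + 2) * B}"
proof
  fix x assume "x \<in> {x. x div B \<in> T3 b}"
  then have "b - 1 \<le> x div B" "x div B \<le> b + 1" unfolding T3_def by auto
  then have "(b - 1) * B \<le> x" "x < (b + 1 + 1) * B" using le_of_div_ge lt_of_div_le[OF assms] by blast+
  then show "x \<in> {(b - 1) * B ..< (b + 2) * B}" by simp
qed

lemma card_T3_set: assumes "0 < B" shows "finite {x. x div B \<in> T3 b} \<and> card {x. x div B \<in> T3 b} \<le> 3 * B"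
proof -
  have "card {(b - 1) * B ..< (b + 2) * B} \<le> 3 * B"
    by (cases b) (auto simp: algebra_simps)
  moreover have "finite {x. x div B \<in> T3 b}"
    by (rule finite_subset[OF T3_interval[OF assms]]) simp
  moreover have "card {x. x div B \<in> T3 b} \<le> card {(b - 1) * B ..< (b + 2) * B}"
    by (rule card_mono[OF _ T3_interval[OF assms]]) simp
  ultimately show ?thesis by linarith
qed

lemma card_Nset: assumes "0 < B" shows "finite (Nset B l) \<and> card (Nset B l) \<le> 18 * B + 3"
proof -
  define b where "b = pib B l"
  define Q where "Q = {(p, k). prime p \<and> 1 \<le> k \<and> p ^ k div B \<in> T3 b}"
  have inj: "inj_on (\<lambda>(p, k). p ^ k) Q"
  proof (rule inj_onI)
    fix x y assume x: "x \<in> Q" and y: "y \<in> Q" and eq: "(\<lambda>(p, k). p ^ k) x = (\<lambda>(p, k). (p::nat) ^ k) y"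
    obtain p k where xp: "x = (p, k)" by (cases x)
    obtain p' k' where yp: "y = (p', k')" by (cases y)
    have h: "prime p" "1 \<le> k" "prime p'" "1 \<le> k'" using x y xp yp unfolding Q_def by auto
    have "p ^ k = p' ^ k'" using eq xp yp by simp
    from prime_power_inj'[OF h(1,3) this] h show "x = y" using xp yp by simp
  qed
  have im: "(\<lambda>(p, k). p ^ k) ` Q \<subseteq> {x. x div B \<in> T3 b}" unfolding Q_def by auto
  have fT: "finite {x. x div B \<in> T3 b}" "card {x. x div B \<in> T3 b} \<le> 3 * B"
    using card_T3_set[OF assms] by auto
  have fQ: "finite Q"
    by (rule finite_imageD[OF finite_subset[OF im fT(1)] inj])
  have "card Q = card ((\<lambda>(p, k). p ^ k) ` Q)" using card_image[OF inj] by simp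
  also have "\<dots> \<le> card {x. x div B \<in> T3 b}" by (rule card_mono[OF fT(1) im])
  finally have cQ: "card Q \<le> 3 * B" using fT(2) by linarith
  define A where "A = (\<lambda>b. (0::nat, b, 0::nat)) ` T3 b"
  define F where "F = (\<lambda>(p, k). (\<lambda>c. (p, k, c)) ` S6 B (p * k) (c0 l p k))"
  define C where "C = (\<Union>x\<in>Q. F x)"
  have sub: "Nset B l \<subseteq> A \<union> C" unfolding Nset_def A_def C_def Q_def b_def F_def by auto
  have fA: "finite A" unfolding A_def using card_T3 by simp
  have "card A \<le> card (T3 b)" unfolding A_def by (rule card_image_le) (simp add: card_T3)
  then have cA: "card A \<le> 3" using card_T3[of b] by linarith
  have fF: "finite (F x)" for x unfolding F_def using card_S6 by (auto split: prod.splits)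
  have cF: "card (F x) \<le> 6" for x
  proof -
    obtain p k where x: "x = (p, k)" by (cases x)
    have "card (F x) \<le> card (S6 B (p * k) (c0 l p k))" unfolding F_def x
      by (simp add: card_image_le card_S6)
    then show ?thesis using card_S6[of B "p*k" "c0 l p k"] by linarith
  qed
  have fC: "finite C" unfolding C_def using fQ fF by blast
  have "card C \<le> (\<Sum>x\<in>Q. card (F x))" unfolding C_def by (rule card_UN_le[OF fQ])
  also have "\<dots> \<le> (\<Sum>x\<in>Q. 6)" by (rule sum_mono) (rule cF)
  also have "\<dots> = 6 * card Q" by simp
  finally have "card C \<le> 18 * B" using cQ by linarith
  then have "card (A \<union> C) \<le> 18 * B + 3" using card_Un_le[of A C] cA by linarith
  moreover have "finite (A \<union> C)" using fA fC by simp
  ultimately show ?thesis using sub card_mono[OF _ sub] finite_subset[OF sub] by fastforce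
qed

lemma same_div_close: assumes "0 < B" "a div B = b div (B::nat)" shows "\<bar>real a - real b\<bar> < real B"
proof -
  have 1: "a < (b div B + 1) * B" using lt_of_div_le[OF assms(1)] assms(2) by simp
  have 2: "b div B * B \<le> b" using le_of_div_ge by blast
  have 3: "b < (a div B + 1) * B" using lt_of_div_le[OF assms(1)] assms(2) by simp
  have 4: "a div B * B \<le> a" using le_of_div_ge by blast
  have "a < b div B * B + B" using 1 by (simp add: algebra_simps)
  then have "a < b + B" using 2 by linarith
  moreover have "b < a div B * B + B" using 3 by (simp add: algebra_simps)
  then have "b < a + B" using 4 by linarith
  ultimately have "a < b + B" "b < a + B" by auto
  then show ?thesis by linarith
qed

lemma diam: assumes "u \<in> Xv" "v \<in> Xv" "0 < B" "lab B u = lab B v"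
  shows "gdist u v \<le> 3 * real B"
proof -
  note cu = lab_cases[OF assms(1,3)] and cv' = lab_cases[OF assms(2,3)]
  show ?thesis
  proof (cases "fst (lab B u) = 0")
    case True
    then have u0: "lab B u = (0, pi0 u div B, 0)" "gdist u (Nat (pi0 u)) \<le> real B" using cu by auto
    have v0: "lab B v = (0, pi0 v div B, 0)" "gdist v (Nat (pi0 v)) \<le> real B" using cv' True assms(4) by auto
    have "pi0 u div B = pi0 v div B" using u0 v0 assms(4) by simp
    then have cl: "\<bar>real (pi0 u) - real (pi0 v)\<bar> < real B" by (rule same_div_close[OF assms(3)])
    have "gdist (Nat (pi0 u)) (Nat (pi0 v)) \<le> \<bar>real (pi0 u) - real (pi0 v)\<bar>"
      by (rule gdist_le[OF walk_line'])
    then have "gdist (Nat (pi0 u)) (Nat (pi0 v)) \<le> real B" using cl by linarith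
    moreover have "gdist u v \<le> gdist u (Nat (pi0 u)) + gdist (Nat (pi0 u)) v"
      using gdist_triangle assms by simp
    moreover have "gdist (Nat (pi0 u)) v \<le> gdist (Nat (pi0 u)) (Nat (pi0 v)) + gdist (Nat (pi0 v)) v"
      using gdist_triangle assms by simp
    ultimately show ?thesis using u0 v0 gdist_sym[of v "Nat (pi0 v)"] by linarith
  next
    case False
    then obtain p k i where hu: "u = Cyc p k i" "prime p" "1 \<le> k" "0 < i" "i < p * k" "B < p"
      "lab B u = (p, k, i div B)" using cu by auto
    then obtain p' k' j where hv: "v = Cyc p' k' j" "prime p'" "1 \<le> k'" "0 < j" "j < p' * k'" "B < p'"
      "lab B v = (p', k', j div B)" using cv' False assms(4) by auto
    have e: "p' = p" "k' = k" "i div B = j div B" using hu(7) hv(7) assms(4) by auto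
    have cl: "\<bar>real i - real j\<bar> < real B" using same_div_close[OF assms(3) e(3)] .
    have "wwalk (cv p k i) (cv p k j) \<bar>real i - real j\<bar>"
      by (rule walk_cyc'[OF hu(2,3,5)]) (use hv e in simp)
    then have "gdist u v \<le> \<bar>real i - real j\<bar>" using hu hv e gdist_le by (simp add: cv_def)
    then show ?thesis using cl by linarith
  qed
qed


definition chains :: "nat \<Rightarrow> vert \<Rightarrow> nat \<Rightarrow> (nat \<times> nat \<times> nat) list set" where
  "chains B x0 K = {ls. length ls = Suc K \<and> ls ! 0 = lab B x0 \<and> (\<forall>t<K. ls ! Suc t \<in> Nset B (ls ! t))}"

lemma chains_card: assumes "0 < B"
  shows "finite (chains B x0 K) \<and> card (chains B x0 K) \<le> (18 * B + 3) ^ K"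
proof (induction K)
  case 0
  have "chains B x0 0 = {[lab B x0]}"
  proof (intro set_eqI iffI)
    fix ls assume "ls \<in> chains B x0 0"
    then have "length ls = 1" "ls ! 0 = lab B x0" unfolding chains_def by auto
    then show "ls \<in> {[lab B x0]}" by (cases ls) auto
  qed (auto simp: chains_def)
  then show ?case by simp
next
  case (Suc K)
  define M where "M = 18 * B + 3"
  define S where "S = (SIGMA l:chains B x0 K. Nset B (last l))"
  have sub: "chains B x0 (Suc K) \<subseteq> (\<lambda>(l, c). l @ [c]) ` S"
  proof
    fix ls assume ls: "ls \<in> chains B x0 (Suc K)"
    then have len: "length ls = Suc (Suc K)" and h0: "ls ! 0 = lab B x0"
      and hs: "\<And>t. t < Suc K \<Longrightarrow> ls ! Suc t \<in> Nset B (ls ! t)" unfolding chains_def by auto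
    define l where "l = butlast ls"
    have ne: "ls \<noteq> []" using len by auto
    have lsd: "ls = l @ [last ls]" unfolding l_def using ne by simp
    have ll: "length l = Suc K" unfolding l_def using len by simp
    have ln: "\<And>t. t < Suc K \<Longrightarrow> l ! t = ls ! t" unfolding l_def using len by (simp add: nth_butlast)
    have "l \<in> chains B x0 K" unfolding chains_def using ll ln h0 hs by auto
    moreover have "last l = ls ! K"
    proof -
      have "l \<noteq> []" using ll by auto
      then have "last l = l ! K" using ll by (simp add: last_conv_nth)
      then show ?thesis using ln[of K] by simp
    qed
    moreover have "last ls = ls ! Suc K" using len ne by (simp add: last_conv_nth)
    ultimately have "(l, last ls) \<in> S" unfolding S_def using hs[of K] by auto
    then show "ls \<in> (\<lambda>(l, c). l @ [c]) ` S" using lsd by force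
  qed
  have fS: "finite S" unfolding S_def using Suc.IH card_Nset[OF assms] by auto
  have "card S = (\<Sum>l\<in>chains B x0 K. card (Nset B (last l)))"
    unfolding S_def using Suc.IH card_Nset[OF assms] by simp
  also have "\<dots> \<le> (\<Sum>l\<in>chains B x0 K. M)"
    by (rule sum_mono) (use card_Nset[OF assms] in \<open>simp add: M_def\<close>)
  also have "\<dots> = card (chains B x0 K) * M" by simp
  also have "\<dots> \<le> M ^ K * M" using Suc.IH M_def by simp
  finally have cS: "card S \<le> M ^ Suc K" by (simp add: mult.commute)
  have "card (chains B x0 (Suc K)) \<le> card ((\<lambda>(l, c). l @ [c]) ` S)"
    by (rule card_mono[OF _ sub]) (simp add: fS)
  also have "\<dots> \<le> card S" by (rule card_image_le[OF fS])
  finally show ?case using cS finite_subset[OF sub] fS M_def by auto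
qed

lemma dp_facts: assumes "xs \<in> delta_paths Xv gdist \<delta> n x0"
  shows "length xs = Suc n" "set xs \<subseteq> Xv" "xs ! 0 = x0" "\<And>i. i < n \<Longrightarrow> gdist (xs ! i) (xs ! Suc i) \<le> \<delta>"
proof -
  have h: "length xs = Suc n" "set xs \<subseteq> Xv" "hd xs = x0" "\<And>i. i < n \<Longrightarrow> gdist (xs ! i) (xs ! Suc i) \<le> \<delta>"
    using assms unfolding delta_paths_def by auto
  have "xs \<noteq> []" using h(1) by auto
  then have "xs ! 0 = x0" using h(3) by (simp add: hd_conv_nth)
  with h show "length xs = Suc n" "set xs \<subseteq> Xv" "xs ! 0 = x0" "\<And>i. i < n \<Longrightarrow> gdist (xs ! i) (xs ! Suc i) \<le> \<delta>"
    by auto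
qed

lemma dp_mem: assumes "xs \<in> delta_paths Xv gdist \<delta> n x0" "i \<le> n" shows "xs ! i \<in> Xv"
  using dp_facts[OF assms(1)] assms(2) by (metis le_imp_less_Suc nth_mem subsetD)

lemma dp_dist: assumes "xs \<in> delta_paths Xv gdist \<delta> n x0" "i \<le> j" "j \<le> n"
  shows "gdist (xs ! i) (xs ! j) \<le> real (j - i) * \<delta>"
  using assms(2,3)
proof (induction j)
  case 0 then show ?case by (simp add: gdist_refl)
next
  case (Suc j)
  show ?case
  proof (cases "i = Suc j")
    case True then show ?thesis by (simp add: gdist_refl)
  next
    case False
    then have ij: "i \<le> j" using Suc by simp
    have "gdist (xs ! i) (xs ! Suc j) \<le> gdist (xs ! i) (xs ! j) + gdist (xs ! j) (xs ! Suc j)"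
      using dp_mem[OF assms(1)] Suc ij by (intro gdist_triangle) auto
    also have "\<dots> \<le> real (j - i) * \<delta> + \<delta>"
      using Suc.IH[OF ij] Suc dp_facts(4)[OF assms(1), of j] by simp
    also have "\<dots> = real (Suc j - i) * \<delta>" using ij by (simp add: of_nat_diff algebra_simps)
    finally show ?thesis .
  qed
qed


lemma sep_bound:
  assumes d0: "0 \<le> \<delta>" and B0: "0 < B" and L0: "0 < L" and LB: "real L * \<delta> < real B"
    and BR: "5 * real B \<le> R" and x0: "x0 \<in> Xv"
    and fP: "finite P" and PD: "P \<subseteq> delta_paths Xv gdist \<delta> n x0" and sep: "separated_paths gdist R P"
  shows "card P \<le> (18 * B + 3) ^ (n div L)"
proof -
  define K where "K = n div L"
  define sig where "sig xs = map (\<lambda>t. lab B (xs ! (t * L))) [0..<Suc K]" for xs :: "vert list"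
  have KL: "K * L \<le> n" unfolding K_def by (simp add: div_times_less_eq_dividend)
  have sig_nth: "sig xs ! t = lab B (xs ! (t * L))" if "t \<le> K" for xs t
    unfolding sig_def using that by (simp del: upt_Suc add: nth_upt)
  have ch: "sig xs \<in> chains B x0 K" if xs: "xs \<in> delta_paths Xv gdist \<delta> n x0" for xs
  proof -
    have "length (sig xs) = Suc K" unfolding sig_def by simp
    moreover have "sig xs ! 0 = lab B x0" using sig_nth[of 0 xs] dp_facts(3)[OF xs] by simp
    moreover have "sig xs ! Suc t \<in> Nset B (sig xs ! t)" if t: "t < K" for t
    proof -
      have le: "Suc t * L \<le> n" using t KL by (meson Suc_leI le_trans mult_le_mono1)
      have le2: "t * L \<le> Suc t * L" by simp
      have "gdist (xs ! (t * L)) (xs ! (Suc t * L)) \<le> real (Suc t * L - t * L) * \<delta>"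
        by (rule dp_dist[OF xs le2 le])
      also have "real (Suc t * L - t * L) = real L" by simp
      finally have "gdist (xs ! (t * L)) (xs ! (Suc t * L)) < real B" using LB by linarith
      then have "lab B (xs ! (Suc t * L)) \<in> Nset B (lab B (xs ! (t * L)))"
        using dp_mem[OF xs] le le2 B0 by (intro neighbor) auto
      then show ?thesis using sig_nth t by simp
    qed
    ultimately show ?thesis unfolding chains_def by auto
  qed
  have close: "gdist (xs ! i) (ys ! i) < R"
    if xs: "xs \<in> delta_paths Xv gdist \<delta> n x0" and ys: "ys \<in> delta_paths Xv gdist \<delta> n x0"
      and eq: "sig xs = sig ys" and i: "i \<le> n" for xs ys i
  proof -
    define t where "t = i div L"
    have tL: "t * L \<le> i" unfolding t_def by (simp add: div_times_less_eq_dividend)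
    have iL: "i < (t + 1) * L" unfolding t_def using lt_of_div_le[OF L0, of i "i div L"] by simp
    have tK: "t \<le> K" unfolding t_def K_def using i by (rule div_le_mono)
    have tn: "t * L \<le> n" using tL i by simp
    have "lab B (xs ! (t * L)) = lab B (ys ! (t * L))" using sig_nth[OF tK, of xs] sig_nth[OF tK, of ys] eq by simp
    then have m: "gdist (xs ! (t * L)) (ys ! (t * L)) \<le> 3 * real B"
      using dp_mem[OF xs tn] dp_mem[OF ys tn] B0 by (intro diam) auto
    have dd: "real (i - t * L) * \<delta> < real B"
    proof -
      have "i - t * L \<le> L" using iL tL by simp
      then have "real (i - t * L) \<le> real L" by (rule of_nat_mono)
      then have "real (i - t * L) * \<delta> \<le> real L * \<delta>" using d0 by (rule mult_right_mono)
      then show ?thesis using LB by linarith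
    qed
    have a: "gdist (xs ! (t * L)) (xs ! i) \<le> real (i - t * L) * \<delta>" by (rule dp_dist[OF xs tL i])
    have b: "gdist (ys ! (t * L)) (ys ! i) \<le> real (i - t * L) * \<delta>" by (rule dp_dist[OF ys tL i])
    have Xs: "xs ! i \<in> Xv" "xs ! (t * L) \<in> Xv" "ys ! (t * L) \<in> Xv" "ys ! i \<in> Xv"
      using dp_mem[OF xs] dp_mem[OF ys] i tn by auto
    have "gdist (xs ! i) (ys ! i) \<le> gdist (xs ! i) (xs ! (t * L)) + gdist (xs ! (t * L)) (ys ! i)"
      using Xs by (intro gdist_triangle) auto
    moreover have "gdist (xs ! (t * L)) (ys ! i) \<le> gdist (xs ! (t * L)) (ys ! (t * L)) + gdist (ys ! (t * L)) (ys ! i)"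
      using Xs by (intro gdist_triangle) auto
    moreover have "gdist (xs ! i) (xs ! (t * L)) = gdist (xs ! (t * L)) (xs ! i)" by (rule gdist_sym)
    ultimately show ?thesis using a b m dd BR by linarith
  qed
  have inj: "inj_on sig P"
  proof (rule inj_onI)
    fix xs ys assume xs: "xs \<in> P" and ys: "ys \<in> P" and eq: "sig xs = sig ys"
    show "xs = ys"
    proof (rule ccontr)
      assume ne: "xs \<noteq> ys"
      then have "R \<le> path_dist gdist xs ys" using sep xs ys unfolding separated_paths_def by blast
      moreover have "path_dist gdist xs ys < R"
      proof -
        have xsD: "xs \<in> delta_paths Xv gdist \<delta> n x0" and ysD: "ys \<in> delta_paths Xv gdist \<delta> n x0"
          using xs ys PD by auto
        have S: "{gdist (xs ! i) (ys ! i) | i. i < length xs} = (\<lambda>i. gdist (xs ! i) (ys ! i)) ` {..<Suc n}"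
          using dp_facts(1)[OF xsD] by auto
        have "Max ((\<lambda>i. gdist (xs ! i) (ys ! i)) ` {..<Suc n}) < R"
          using close[OF xsD ysD eq] by (subst Max_less_iff) auto
        then show ?thesis unfolding path_dist_def S .
      qed
      ultimately show False by simp
    qed
  qed
  have "card P = card (sig ` P)" using card_image[OF inj] by simp
  also have "\<dots> \<le> card (chains B x0 K)"
    by (rule card_mono) (use chains_card[OF B0] ch PD in auto)
  also have "\<dots> \<le> (18 * B + 3) ^ K" using chains_card[OF B0] by simp
  finally show ?thesis unfolding K_def .
qed

lemma sep_count_le:
  assumes "0 \<le> \<delta>" "0 < B" "0 < L" "real L * \<delta> < real B" "5 * real B \<le> R" "x0 \<in> Xv"
  shows "sep_count Xv gdist n R \<delta> x0 \<le> ereal (real ((18 * B + 3) ^ (n div L)))"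
  unfolding sep_count_def
proof (rule Sup_least)
  fix y assume "y \<in> {ereal (real (card P)) |P. finite P \<and> P \<subseteq> delta_paths Xv gdist \<delta> n x0 \<and> separated_paths gdist R P}"
  then obtain P where y: "y = ereal (real (card P))" and P: "finite P" "P \<subseteq> delta_paths Xv gdist \<delta> n x0"
    "separated_paths gdist R P" by blast
  have "card P \<le> (18 * B + 3) ^ (n div L)" by (rule sep_bound[OF assms P])
  then have "real (card P) \<le> real ((18 * B + 3) ^ (n div L))" by (rule of_nat_mono)
  then show "y \<le> ereal (real ((18 * B + 3) ^ (n div L)))" using y by simp
qed

lemma sep_count_ge:
  assumes "0 \<le> \<delta>" "x0 \<in> Xv"
  shows "1 \<le> sep_count Xv gdist n R \<delta> x0"
proof -
  define P where "P = {replicate (Suc n) x0}"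
  have "P \<subseteq> delta_paths Xv gdist \<delta> n x0"
    unfolding P_def delta_paths_def using assms by (auto simp: gdist_refl simp del: replicate_Suc)
  moreover have "separated_paths gdist R P" unfolding P_def separated_paths_def by simp
  ultimately have "ereal (real (card P)) \<le> sep_count Xv gdist n R \<delta> x0"
    unfolding sep_count_def by (intro Sup_upper) (use P_def in blast)
  then show ?thesis by (simp add: P_def one_ereal_def)
qed


lemma elog_bound: assumes "1 \<le> s" "s \<le> ereal X"
  shows "elog s = ereal (ln (real_of_ereal s)) \<and> 1 \<le> real_of_ereal s \<and> real_of_ereal s \<le> X"
  using assms by (cases s) (auto simp: elog_def one_ereal_def)

lemma term_bounds:
  assumes d0: "0 \<le> \<delta>" and B0: "0 < B" and L0: "0 < L" and LB: "real L * \<delta> < real B"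
    and BR: "5 * real B \<le> R" and x0: "x0 \<in> Xv"
  shows "0 \<le> ereal (1 / real n) * elog (sep_count Xv gdist n R \<delta> x0)"
    "ereal (1 / real n) * elog (sep_count Xv gdist n R \<delta> x0) \<le> ereal (ln (real (18 * B + 3)) / real L)"
proof -
  define s where "s = sep_count Xv gdist n R \<delta> x0"
  define M where "M = 18 * B + 3"
  define r where "r = real_of_ereal s"
  have h: "elog s = ereal (ln r)" "1 \<le> r" "r \<le> real (M ^ (n div L))"
    using elog_bound[OF sep_count_ge[OF d0 x0] sep_count_le[OF assms]] unfolding s_def r_def M_def by auto
  have lr: "0 \<le> ln r" using h(2) by simp
  have eq: "ereal (1 / real n) * elog s = ereal (ln r / real n)" using h(1) by simp
  show "0 \<le> ereal (1 / real n) * elog (sep_count Xv gdist n R \<delta> x0)"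
    using eq lr unfolding s_def[symmetric] by simp
  have M1: "1 \<le> real M" unfolding M_def by simp
  have "ln r \<le> ln (real (M ^ (n div L)))" using h(2,3) by (intro ln_mono) auto
  also have "\<dots> = real (n div L) * ln (real M)" by (simp add: ln_realpow)
  also have "\<dots> \<le> (real n / real L) * ln (real M)"
    using M1 by (intro mult_right_mono of_nat_div_le_of_nat) auto
  finally have lnr: "ln r \<le> real n / real L * ln (real M)" .
  have "ln r / real n \<le> ln (real M) / real L"
  proof (cases "n = 0")
    case True then show ?thesis using M1 by simp
  next
    case False
    then have "ln r / real n \<le> (real n / real L * ln (real M)) / real n"
      using lnr by (intro divide_right_mono) auto
    also have "\<dots> = ln (real M) / real L" using False by simp
    finally show ?thesis .
  qed
  then show "ereal (1 / real n) * elog (sep_count Xv gdist n R \<delta> x0) \<le> ereal (ln (real (18 * B + 3)) / real L)"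
    using eq unfolding s_def[symmetric] M_def by simp
qed


lemma h_lim: "((\<lambda>R. 40 * \<delta> * (ln (4 * R) / (4 * R))) \<longlongrightarrow> (0::real)) at_top"
proof -
  have f: "filterlim (\<lambda>R::real. 4 * R) at_top at_top"
    by (rule filterlim_tendsto_pos_mult_at_top[OF tendsto_const _ filterlim_ident]) simp
  have "((\<lambda>R::real. ln (4 * R) / (4 * R)) \<longlongrightarrow> 0) at_top"
    using filterlim_compose[OF ln_x_over_x_tendsto_0 f] by simp
  then show ?thesis by (rule tendsto_mult_right_zero)
qed

lemma key_bounds:
  assumes d1: "1 \<le> \<delta>" and x0: "x0 \<in> Xv" and R: "20 + 20 * \<delta> \<le> R"
  shows "0 \<le> limsup (\<lambda>n. ereal (1 / real n) * elog (sep_count Xv gdist n R \<delta> x0)) \<and>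
    limsup (\<lambda>n. ereal (1 / real n) * elog (sep_count Xv gdist n R \<delta> x0)) \<le> ereal (40 * \<delta> * (ln (4 * R) / (4 * R)))"
proof -
  define B where "B = nat \<lfloor>R / 5\<rfloor>"
  define x where "x = (real B - 1) / \<delta>"
  define L where "L = nat \<lfloor>x\<rfloor>"
  have R40: "40 \<le> R" using R d1 by linarith
  have fl0: "0 \<le> \<lfloor>R / 5\<rfloor>" using R40 by simp
  have rB: "real B = real_of_int \<lfloor>R / 5\<rfloor>" unfolding B_def using fl0 by simp
  have B1: "R / 5 - 1 < real B" "real B \<le> R / 5"
    unfolding rB using real_of_int_floor_gt_diff_one[of "R/5"] of_int_floor_le[of "R/5"] by auto
  have B0: "0 < B" using B1 R40 by linarith
  have BR: "5 * real B \<le> R" using B1 by linarith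
  have x0': "0 \<le> x" unfolding x_def using B1 R40 d1 by simp
  have rL: "real L = real_of_int \<lfloor>x\<rfloor>" unfolding L_def using x0' by simp
  have L1: "x - 1 < real L" "real L \<le> x"
    unfolding rL using real_of_int_floor_gt_diff_one[of x] of_int_floor_le[of x] by auto
  have LB: "real L * \<delta> < real B"
  proof -
    have "real L * \<delta> \<le> x * \<delta>" using L1 d1 by (intro mult_right_mono) auto
    also have "x * \<delta> = real B - 1" unfolding x_def using d1 by simp
    finally show ?thesis by simp
  qed
  have "R / (10 * \<delta>) \<le> x - 1"
  proof -
    have "R / 10 \<le> real B - 1 - \<delta>" using B1 R d1 by linarith
    then have "R / 10 / \<delta> \<le> (real B - 1 - \<delta>) / \<delta>" using d1 by (intro divide_right_mono) auto
    also have "(real B - 1 - \<delta>) / \<delta> = x - 1" unfolding x_def using d1 by (simp add: field_simps)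
    finally show ?thesis by simp
  qed
  then have LR: "R / (10 * \<delta>) < real L" using L1 by linarith
  have Rpos: "0 < R / (10 * \<delta>)" using R40 d1 by simp
  have L0: "0 < L" using LR Rpos by linarith
  have d0: "0 \<le> \<delta>" using d1 by simp
  have "ln (real (18 * B + 3)) \<le> ln (4 * R)"
    using B1 R40 by (intro ln_mono) auto
  moreover have "0 \<le> ln (4 * R)" using R40 by simp
  ultimately have "ln (real (18 * B + 3)) / real L \<le> ln (4 * R) / real L"
    using L0 by (intro divide_right_mono) auto
  also have "\<dots> \<le> ln (4 * R) / (R / (10 * \<delta>))"
  proof (rule divide_left_mono)
    show "0 \<le> ln (4 * R)" by fact
    show "R / (10 * \<delta>) \<le> real L" using LR by simp
    have "0 < real L" using LR Rpos by linarith
    then show "0 < real L * (R / (10 * \<delta>))" using Rpos by (rule mult_pos_pos)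
  qed
  also have "\<dots> = 40 * \<delta> * (ln (4 * R) / (4 * R))" using R40 d1 by (simp add: field_simps)
  finally have hb: "ln (real (18 * B + 3)) / real L \<le> 40 * \<delta> * (ln (4 * R) / (4 * R))" .
  note tb = term_bounds[OF d0 B0 L0 LB BR x0]
  have "limsup (\<lambda>n. ereal (1 / real n) * elog (sep_count Xv gdist n R \<delta> x0)) \<le> ereal (40 * \<delta> * (ln (4 * R) / (4 * R)))"
  proof (rule Limsup_bounded, rule always_eventually, rule allI)
    fix n
    have "ereal (1 / real n) * elog (sep_count Xv gdist n R \<delta> x0) \<le> ereal (ln (real (18 * B + 3)) / real L)"
      by (rule tb(2))
    also have "\<dots> \<le> ereal (40 * \<delta> * (ln (4 * R) / (4 * R)))" using hb by simp
    finally show "ereal (1 / real n) * elog (sep_count Xv gdist n R \<delta> x0) \<le> ereal (40 * \<delta> * (ln (4 * R) / (4 * R)))" .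
  qed
  moreover have "0 \<le> limsup (\<lambda>n. ereal (1 / real n) * elog (sep_count Xv gdist n R \<delta> x0))"
    by (rule le_Limsup) (use tb(1) in auto)
  ultimately show ?thesis by simp
qed

lemma inner_lim: assumes "1 \<le> \<delta>" "x0 \<in> Xv"
  shows "((\<lambda>R. limsup (\<lambda>n. ereal (1 / real n) * elog (sep_count Xv gdist n R \<delta> x0))) \<longlongrightarrow> 0) at_top"
proof (rule tendsto_sandwich)
  have ev: "eventually (\<lambda>R. 20 + 20 * \<delta> \<le> R) at_top" by (rule eventually_ge_at_top)
  show "eventually (\<lambda>R. (0::ereal) \<le> limsup (\<lambda>n. ereal (1 / real n) * elog (sep_count Xv gdist n R \<delta> x0))) at_top"
    using ev by eventually_elim (use key_bounds[OF assms] in blast)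
  show "eventually (\<lambda>R. limsup (\<lambda>n. ereal (1 / real n) * elog (sep_count Xv gdist n R \<delta> x0)) \<le> ereal (40 * \<delta> * (ln (4 * R) / (4 * R)))) at_top"
    using ev by eventually_elim (use key_bounds[OF assms] in blast)
  show "((\<lambda>R. 0::ereal) \<longlongrightarrow> 0) at_top" by simp
  show "((\<lambda>R. ereal (40 * \<delta> * (ln (4 * R) / (4 * R)))) \<longlongrightarrow> 0) at_top"
    using tendsto_ereal[OF h_lim[of \<delta>]] by (simp add: zero_ereal_def)
qed

lemma part3: assumes "x0 \<in> Xv" shows "coarse_entropy Xv gdist x0 = 0"
proof -
  have "eventually (\<lambda>\<delta>::real. Lim at_top (\<lambda>R::real. limsup (\<lambda>n. ereal (1 / real n) * elog (sep_count Xv gdist n R \<delta> x0))) = 0) at_top"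
    using eventually_ge_at_top[of "1::real"]
  proof eventually_elim
    case (elim \<delta>)
    show ?case by (rule tendsto_Lim[OF _ inner_lim[OF elim assms]]) simp
  qed
  then have "((\<lambda>\<delta>::real. Lim at_top (\<lambda>R::real. limsup (\<lambda>n. ereal (1 / real n) * elog (sep_count Xv gdist n R \<delta> x0)))) \<longlongrightarrow> 0) at_top"
    by (rule tendsto_eventually)
  then show ?thesis unfolding coarse_entropy_def by (rule tendsto_Lim[rotated]) simp
qed

theorem mainTheorem11:
  shows "chain_connected Xv gdist 1 \<and>
    \<not> (\<exists>(Y :: 'b set) (e :: 'b \<Rightarrow> 'b \<Rightarrow> real) (f :: vert \<Rightarrow> 'b).
          metric_on Y e \<and> bounded_geometry Y e \<and> coarse_equivalence Xv gdist Y e f) \<and>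
    (\<forall>x0\<in>Xv. coarse_entropy Xv gdist x0 = 0)"
  using part1 part2 part3 by blast

end
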